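(* Let $G$ act 3-discontinuously and 2-cocompactly on a compactum $T$. Then $G$ is finitely generated if and only if there exists a nonempty $G$-invariant set $A$ of self-linked entourages of $T$ consisting of finitely many $G$-orbits such that the graph $\Gamma_A$ is connected.
   Context: A compactum is a compact Hausdorff space with at least 3 points; 3-discontinuous means the induced action on the space of 3-element subsets of $T$ is properly discontinuous, 2-cocompact means the induced action on the space of 2-element subsets is cocompact. Let $S^2T$ be the space of unordered pairs $\{x,y\}$ of points of $T$ (with $x=y$ allowed), a quotient of $T\times T$, and $\Delta^2T\subset S^2T$ the diagonal $\{\{x,x\}\}$. An entourage of $T$ is a neighborhood of $\Delta^2T$ in $S^2T$. For an entourage $\mathbf e$, a set $U\subset T$ is $\mathbf e$-small if $\{x,y\}\in\mathbf e$ for all $x,y\in U$. Two entourages $\mathbf a,\mathbf b$ are unlinked ($\mathbf a\bowtie\mathbf b$) if there exist an $\mathbf a$-small set $a$ and a $\mathbf b$-small set $b$ with $a\cup b=T$; otherwise they are linked ($\mathbf a\#\mathbf b$). An entourage $\mathbf a$ is self-linked if $\mathbf a\#\mathbf a$. $G$ acts on entourages via its action on $S^2T$. For a set $A$ of entourages, $\Gamma_A$ is the graph with vertex set $A$ in which distinct $\mathbf a,\mathbf b\in A$ are joined by an edge iff $\mathbf a\#\mathbf b$. *)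

theory Defs
  imports "HOL-Analysis.Analysis" "HOL-Algebra.Group_Action" "HOL-Algebra.Generated_Groups"
begin

text \<open>The space of n-element subsets of T (n = 2, 3), with the quotient topology
  induced from the space of ordered n-tuples of pairwise distinct points.\<close>

definition Theta2 :: "'a set set" where
  "Theta2 = {S. \<exists>x y. x \<noteq> y \<and> S = {x, y}}"

definition Theta3 :: "'a set set" where
  "Theta3 = {S. \<exists>x y z. distinct [x, y, z] \<and> S = {x, y, z}}"

definition theta2_top :: "('a::topological_space) set topology" where
  "theta2_top = topology (\<lambda>U. U \<subseteq> Theta2 \<and>
     openin (top_of_set {(x, y). x \<noteq> y}) {(x, y). x \<noteq> y \<and> {x, y} \<in> U})"

definition theta3_top :: "('a::topological_space) set topology" where
  "theta3_top = topology (\<lambda>U. U \<subseteq> Theta3 \<and>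
     openin (top_of_set {(x, y, z). distinct [x, y, z]})
            {(x, y, z). distinct [x, y, z] \<and> {x, y, z} \<in> U})"

definition set_act :: "('g \<Rightarrow> 'a \<Rightarrow> 'a) \<Rightarrow> 'g \<Rightarrow> 'a set \<Rightarrow> 'a set" where
  "set_act \<phi> g S = \<phi> g ` S"

definition action_by_homeos :: "('g, 'b) monoid_scheme \<Rightarrow> ('g \<Rightarrow> 'a::topological_space \<Rightarrow> 'a) \<Rightarrow> bool" where
  "action_by_homeos G \<phi> \<longleftrightarrow> group_action G UNIV \<phi> \<and>
     (\<forall>g\<in>carrier G. homeomorphism UNIV UNIV (\<phi> g) (\<phi> (inv\<^bsub>G\<^esub> g)))"

definition is_compactum :: "'a::topological_space itself \<Rightarrow> bool" where
  "is_compactum _ \<longleftrightarrow> compact (UNIV :: 'a set) \<and>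
     (\<forall>x y::'a. x \<noteq> y \<longrightarrow> (\<exists>U V. open U \<and> open V \<and> x \<in> U \<and> y \<in> V \<and> U \<inter> V = {})) \<and>
     (\<exists>x y z::'a. distinct [x, y, z])"

definition three_discontinuous :: "('g, 'b) monoid_scheme \<Rightarrow> ('g \<Rightarrow> 'a::topological_space \<Rightarrow> 'a) \<Rightarrow> bool" where
  "three_discontinuous G \<phi> \<longleftrightarrow>
     (\<forall>K. compactin theta3_top K \<longrightarrow>
        finite {g \<in> carrier G. set_act \<phi> g ` K \<inter> K \<noteq> {}})"

definition two_cocompact :: "('g, 'b) monoid_scheme \<Rightarrow> ('g \<Rightarrow> 'a::topological_space \<Rightarrow> 'a) \<Rightarrow> bool" where
  "two_cocompact G \<phi> \<longleftrightarrow>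
     (\<exists>K. compactin theta2_top K \<and> (\<Union>g\<in>carrier G. set_act \<phi> g ` K) = Theta2)"

definition finitely_generated :: "('g, 'b) monoid_scheme \<Rightarrow> bool" where
  "finitely_generated G \<longleftrightarrow> (\<exists>S. finite S \<and> S \<subseteq> carrier G \<and> generate G S = carrier G)"

text \<open>A subset of S^2 T (unordered pairs, diagonal allowed) is represented by the
  symmetric relation on T consisting of all ordered pairs (x,y) with {x,y} in it; this is a
  bijection preserving and reflecting openness (S^2 T carries the quotient topology of T x T).\<close>

definition entourage :: "('a::topological_space \<times> 'a) set \<Rightarrow> bool" where
  "entourage e \<longleftrightarrow> sym e \<and> (\<exists>U. open U \<and> Id \<subseteq> U \<and> U \<subseteq> e)"

definition small :: "('a \<times> 'a) set \<Rightarrow> 'a set \<Rightarrow> bool" where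
  "small e U \<longleftrightarrow> (\<forall>x\<in>U. \<forall>y\<in>U. (x, y) \<in> e)"

definition unlinked :: "('a \<times> 'a) set \<Rightarrow> ('a \<times> 'a) set \<Rightarrow> bool" where
  "unlinked e f \<longleftrightarrow> (\<exists>a b. small e a \<and> small f b \<and> a \<union> b = UNIV)"

definition linked :: "('a \<times> 'a) set \<Rightarrow> ('a \<times> 'a) set \<Rightarrow> bool" where
  "linked e f \<longleftrightarrow> \<not> unlinked e f"

definition self_linked :: "('a \<times> 'a) set \<Rightarrow> bool" where
  "self_linked e \<longleftrightarrow> linked e e"

definition ent_act :: "('g \<Rightarrow> 'a \<Rightarrow> 'a) \<Rightarrow> 'g \<Rightarrow> ('a \<times> 'a) set \<Rightarrow> ('a \<times> 'a) set" where
  "ent_act \<phi> g e = (\<lambda>(x, y). (\<phi> g x, \<phi> g y)) ` e"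

definition ent_orbit :: "('g, 'b) monoid_scheme \<Rightarrow> ('g \<Rightarrow> 'a \<Rightarrow> 'a) \<Rightarrow> ('a \<times> 'a) set \<Rightarrow> ('a \<times> 'a) set set" where
  "ent_orbit G \<phi> e = (\<lambda>g. ent_act \<phi> g e) ` carrier G"

definition Gamma_edges :: "('a \<times> 'a) set set \<Rightarrow> (('a \<times> 'a) set \<times> ('a \<times> 'a) set) set" where
  "Gamma_edges A = {(a, b). a \<in> A \<and> b \<in> A \<and> a \<noteq> b \<and> linked a b}"

definition Gamma_connected :: "('a \<times> 'a) set set \<Rightarrow> bool" where
  "Gamma_connected A \<longleftrightarrow> (\<forall>a\<in>A. \<forall>b\<in>A. (a, b) \<in> (Gamma_edges A)\<^sup>*)"

end

theory Submission
  imports Defs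
begin

lemma theta3_istop: "istopology (\<lambda>U. U \<subseteq> Theta3 \<and>
     openin (top_of_set {(x, y, z). distinct [x, y, z]})
            {(x, y, z). distinct [x, y, z] \<and> {x, y, z} \<in> U})"
  unfolding istopology_def
  apply (rule conjI)
   apply (intro allI impI)
  subgoal premises p for S T
  proof -
    have eq: "{(x, y, z). distinct [x, y, z] \<and> {x, y, z} \<in> S \<inter> T} =
     {(x, y, z). distinct [x, y, z] \<and> {x, y, z} \<in> S} \<inter> {(x, y, z). distinct [x, y, z] \<and> {x, y, z} \<in> T}"
      by auto
    show ?thesis using p unfolding eq by (auto intro: openin_Int)
  qed
  apply (intro allI impI)
  subgoal premises p for K
  proof -
    have eq: "{(x, y, z). distinct [x, y, z] \<and> {x, y, z} \<in> \<Union>K} =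
     \<Union>((\<lambda>S. {(x, y, z). distinct [x, y, z] \<and> {x, y, z} \<in> S}) ` K)"
      by auto
    show ?thesis using p unfolding eq by (auto intro!: openin_Union)
  qed
  done

lemma openin_theta3: "openin theta3_top U \<longleftrightarrow> U \<subseteq> Theta3 \<and>
     openin (top_of_set {(x, y, z). distinct [x, y, z]})
            {(x, y, z). distinct [x, y, z] \<and> {x, y, z} \<in> U}"
  unfolding theta3_top_def topology_inverse'[OF theta3_istop] by (rule refl)

lemma topspace_theta3: "topspace (theta3_top :: 'a::topological_space set topology) = Theta3"
proof -
  have "openin theta3_top (Theta3 :: 'a set set)"
    unfolding openin_theta3
  proof
    have "{(x, y, z). distinct [x, y, z] \<and> {x, y, z} \<in> (Theta3 :: 'a set set)} = {(x, y, z). distinct [x, y, z]}"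
      unfolding Theta3_def by blast
    then show "openin (top_of_set {(x, y, z::'a). distinct [x, y, z]}) {(x, y, z). distinct [x, y, z] \<and> {x, y, z} \<in> Theta3}"
      by simp
  qed simp
  then show ?thesis
    by (metis openin_subset openin_theta3 openin_topspace subset_antisym)
qed

definition tri :: "'a set \<Rightarrow> 'a set \<Rightarrow> 'a set \<Rightarrow> 'a set set" where
  "tri A B C = {t. \<exists>a b c. t = {a, b, c} \<and> a \<in> A \<and> b \<in> B \<and> c \<in> C}"

lemma triI: "a \<in> A \<Longrightarrow> b \<in> B \<Longrightarrow> c \<in> C \<Longrightarrow> {a, b, c} \<in> tri A B C"
  unfolding tri_def mem_Collect_eq by blast

lemma triE:
  assumes "t \<in> tri A B C"
  obtains a b c where "t = {a, b, c}" "a \<in> A" "b \<in> B" "c \<in> C"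
  using assms unfolding tri_def mem_Collect_eq
  apply (elim exE conjE)
  apply (rule that)
     apply assumption+
  done

lemma compactin_tri:
  fixes A B C :: "'a::topological_space set"
  assumes "compact A" "compact B" "compact C" "A \<inter> B = {}" "A \<inter> C = {}" "B \<inter> C = {}"
  shows "compactin theta3_top (tri A B C)"
proof -
  have dist: "distinct [a, b, c]" if "a \<in> A" "b \<in> B" "c \<in> C" for a b c
    using assms(4-6) that by auto
  show ?thesis
  unfolding compactin_def topspace_theta3
proof (intro conjI allI impI)
  have dist: "distinct [a, b, c]" if "a \<in> A" "b \<in> B" "c \<in> C" for a b c
    using assms(4-6) that by auto
  show "tri A B C \<subseteq> Theta3"
  proof
    fix t assume "t \<in> tri A B C"
    then obtain a b c where t: "t = {a, b, c}" "a \<in> A" "b \<in> B" "c \<in> C" by (rule triE)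
    have "distinct [a, b, c]" using dist t by simp
    then show "t \<in> Theta3" unfolding Theta3_def mem_Collect_eq using t(1) by (intro exI conjI)
  qed
next
  fix \<U> assume U: "(\<forall>U\<in>\<U>. openin theta3_top U) \<and> tri A B C \<subseteq> \<Union>\<U>"
  have "\<forall>U\<in>\<U>. \<exists>W. open W \<and> {(x, y, z). distinct [x, y, z] \<and> {x, y, z} \<in> U} = {(x, y, z). distinct [x, y, z]} \<inter> W"
    using U unfolding openin_theta3 openin_open by blast
  then obtain W where W0: "\<forall>U\<in>\<U>. open (W U) \<and> {(x, y, z). distinct [x, y, z] \<and> {x, y, z} \<in> U} = {(x, y, z). distinct [x, y, z]} \<inter> W U"
    by (rule bchoice[THEN exE])
  have W: "open (W U) \<and> {(x, y, z). distinct [x, y, z] \<and> {x, y, z} \<in> U} = {(x, y, z). distinct [x, y, z]} \<inter> W U" if "U\<in>\<U>" for U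
    using W0 that by blast
  have cpt: "compact (A \<times> B \<times> C)" using assms by (intro compact_Times)
  have cov: "A \<times> B \<times> C \<subseteq> (\<Union>U\<in>\<U>. W U)"
  proof clarify
    fix a b c assume abc: "a \<in> A" "b \<in> B" "c \<in> C"
    then have d: "distinct [a, b, c]" using dist by simp
    have "{a, b, c} \<in> tri A B C" using abc by (rule triI)
    then obtain U where "U \<in> \<U>" "{a, b, c} \<in> U" using U by blast
    then have p: "(a, b, c) \<in> {(x, y, z). distinct [x, y, z] \<and> {x, y, z} \<in> U}" using d by simp
    have E: "{(x, y, z). distinct [x, y, z] \<and> {x, y, z} \<in> U} = {(x, y, z). distinct [x, y, z]} \<inter> W U"
      using W[OF \<open>U \<in> \<U>\<close>] by (rule conjunct2)
    from p[unfolded E] have "(a, b, c) \<in> W U" by (rule IntD2)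
    then show "(a, b, c) \<in> (\<Union>U\<in>\<U>. W U)" using \<open>U \<in> \<U>\<close> by blast
  qed
  obtain \<F> where F: "\<F> \<subseteq> \<U>" "finite \<F>" "A \<times> B \<times> C \<subseteq> (\<Union>U\<in>\<F>. W U)"
    using compactE_image[OF cpt, of \<U> W] W cov by blast
  have "tri A B C \<subseteq> \<Union>\<F>"
  proof
    fix t assume "t \<in> tri A B C"
    then obtain a b c where t: "t = {a, b, c}" "a \<in> A" "b \<in> B" "c \<in> C" by (rule triE)
    then have d: "distinct [a, b, c]" using dist by simp
    have "(a, b, c) \<in> A \<times> B \<times> C" using t by simp
    then obtain U where U1: "U \<in> \<F>" "(a, b, c) \<in> W U" using F(3) by blast
    then have "U \<in> \<U>" using F(1) by blast
    have E: "{(x, y, z). distinct [x, y, z] \<and> {x, y, z} \<in> U} = {(x, y, z). distinct [x, y, z]} \<inter> W U"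
      using W[OF \<open>U \<in> \<U>\<close>] by (rule conjunct2)
    have "(a, b, c) \<in> {(x, y, z). distinct [x, y, z]} \<inter> W U" using U1(2) d by simp
    then have "(a, b, c) \<in> {(x, y, z). distinct [x, y, z] \<and> {x, y, z} \<in> U}" unfolding E .
    then have "{a, b, c} \<in> U" by simp
    then show "t \<in> \<Union>\<F>" using t(1) U1(1) by blast
  qed
  then show "\<exists>\<F>. finite \<F> \<and> \<F> \<subseteq> \<U> \<and> tri A B C \<subseteq> \<Union>\<F>" using F by blast
qed
qed

definition hausd :: "'a::topological_space itself \<Rightarrow> bool" where
  "hausd _ \<longleftrightarrow> (\<forall>x y::'a. x \<noteq> y \<longrightarrow> (\<exists>U V. open U \<and> open V \<and> x \<in> U \<and> y \<in> V \<and> U \<inter> V = {}))"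

lemma hausdE:
  fixes x y :: "'a::topological_space"
  assumes "hausd TYPE('a)" "x \<noteq> y"
  obtains U V where "open U" "open V" "x \<in> U" "y \<in> V" "U \<inter> V = {}"
proof -
  have "\<exists>U V. open U \<and> open V \<and> x \<in> U \<and> y \<in> V \<and> U \<inter> V = {}"
    using assms unfolding hausd_def by blast
  then show ?thesis using that by blast
qed

lemma regular_nbhd:
  fixes Ob :: "'a::topological_space set"
  assumes "compact (UNIV :: 'a set)" "hausd TYPE('a)" "open Ob" "x \<in> Ob"
  obtains N C where "open N" "closed C" "x \<in> N" "N \<subseteq> C" "C \<subseteq> Ob"
proof -
  have H: "Hausdorff_space (euclidean :: 'a topology)"
    unfolding Hausdorff_space_def disjnt_def
  proof (intro allI impI)
    fix x y :: 'a assume "x \<in> topspace euclidean \<and> y \<in> topspace euclidean \<and> x \<noteq> y"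
    then obtain U V where "open U" "open V" "x \<in> U" "y \<in> V" "U \<inter> V = {}" using hausdE[OF assms(2)] by metis
    then show "\<exists>U V. openin euclidean U \<and> openin euclidean V \<and> x \<in> U \<and> y \<in> V \<and> U \<inter> V = {}" by auto
  qed
  have "compact_space (euclidean :: 'a topology)" using assms(1) unfolding compact_space_def by simp
  then have R: "regular_space (euclidean :: 'a topology)" using compact_Hausdorff_imp_regular_space H by blast
  have c: "closedin euclidean (- Ob)" using assms(3) by (simp add: closed_Compl)
  have "x \<in> topspace euclidean - (- Ob)" using assms(4) by simp
  then have "\<exists>U V. openin euclidean U \<and> openin euclidean V \<and> x \<in> U \<and> - Ob \<subseteq> V \<and> disjnt U V"
    using R c unfolding regular_space_def by blast
  then obtain U V where "open U" "open V" "x \<in> U" "- Ob \<subseteq> V" "disjnt U V" by auto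
  moreover have "U \<subseteq> - V" "- V \<subseteq> Ob" using \<open>disjnt U V\<close> \<open>- Ob \<subseteq> V\<close> unfolding disjnt_def by auto
  moreover have "closed (- V)" using \<open>open V\<close> by (simp add: closed_Compl)
  ultimately show ?thesis using that[of U "- V"] by blast
qed

lemma three_sep:
  fixes x1 x2 x3 :: "'a::topological_space"
  assumes "compact (UNIV :: 'a set)" "hausd TYPE('a)" "distinct [x1, x2, x3]"
  obtains N1 N2 N3 C1 C2 C3 where "open N1" "open N2" "open N3" "closed C1" "closed C2" "closed C3"
    "x1 \<in> N1" "x2 \<in> N2" "x3 \<in> N3" "N1 \<subseteq> C1" "N2 \<subseteq> C2" "N3 \<subseteq> C3"
    "C1 \<inter> C2 = {}" "C1 \<inter> C3 = {}" "C2 \<inter> C3 = {}"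
proof -
  have d: "x1 \<noteq> x2" "x1 \<noteq> x3" "x2 \<noteq> x3" using assms(3) by auto
  obtain U12 V12 where a: "open U12" "open V12" "x1 \<in> U12" "x2 \<in> V12" "U12 \<inter> V12 = {}"
    using hausdE[OF assms(2) d(1)] by metis
  obtain U13 V13 where b: "open U13" "open V13" "x1 \<in> U13" "x3 \<in> V13" "U13 \<inter> V13 = {}"
    using hausdE[OF assms(2) d(2)] by metis
  obtain U23 V23 where c: "open U23" "open V23" "x2 \<in> U23" "x3 \<in> V23" "U23 \<inter> V23 = {}"
    using hausdE[OF assms(2) d(3)] by metis
  have o1: "open (U12 \<inter> U13)" "x1 \<in> U12 \<inter> U13" using a b by auto
  have o2: "open (V12 \<inter> U23)" "x2 \<in> V12 \<inter> U23" using a c by auto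
  have o3: "open (V13 \<inter> V23)" "x3 \<in> V13 \<inter> V23" using b c by auto
  obtain N1 C1 where 1: "open N1" "closed C1" "x1 \<in> N1" "N1 \<subseteq> C1" "C1 \<subseteq> U12 \<inter> U13"
    using regular_nbhd[OF assms(1,2) o1] by metis
  obtain N2 C2 where 2: "open N2" "closed C2" "x2 \<in> N2" "N2 \<subseteq> C2" "C2 \<subseteq> V12 \<inter> U23"
    using regular_nbhd[OF assms(1,2) o2] by metis
  obtain N3 C3 where 3: "open N3" "closed C3" "x3 \<in> N3" "N3 \<subseteq> C3" "C3 \<subseteq> V13 \<inter> V23"
    using regular_nbhd[OF assms(1,2) o3] by metis
  have e12: "C1 \<inter> C2 = {}" using 1(5) 2(5) a(5) by blast
  have e13: "C1 \<inter> C3 = {}" using 1(5) 3(5) b(5) by blast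
  have e23: "C2 \<inter> C3 = {}" using 2(5) 3(5) c(5) by blast
  show ?thesis by (rule that[OF 1(1) 2(1) 3(1) 1(2) 2(2) 3(2) 1(3) 2(3) 3(3) 1(4) 2(4) 3(4) e12 e13 e23])
qed

lemma closed_singleton_pair:
  fixes p q :: "'a::topological_space"
  assumes "hausd TYPE('a)"
  shows "closed {(p, q)}"
proof -
  have "- {(p, q)} = (\<Union>U\<in>{U. open U \<and> p \<notin> U}. U \<times> UNIV) \<union> (\<Union>V\<in>{V. open V \<and> q \<notin> V}. UNIV \<times> V)"
  proof (intro equalityI subsetI)
    fix z assume z: "z \<in> - {(p, q)}"
    obtain a b where zab: "z = (a, b)" by force
    show "z \<in> (\<Union>U\<in>{U. open U \<and> p \<notin> U}. U \<times> UNIV) \<union> (\<Union>V\<in>{V. open V \<and> q \<notin> V}. UNIV \<times> V)"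
    proof (cases "a = p")
      case False
      then obtain U V where "open U" "a \<in> U" "p \<in> V" "U \<inter> V = {}" using assms unfolding hausd_def by metis
      then show ?thesis using zab by blast
    next
      case True
      then have "b \<noteq> q" using z zab by auto
      then obtain U V where "open U" "b \<in> U" "q \<in> V" "U \<inter> V = {}" using assms unfolding hausd_def by metis
      then show ?thesis using zab by blast
    qed
  qed auto
  moreover have "open ((\<Union>U\<in>{U. open U \<and> p \<notin> U}. U \<times> UNIV) \<union> (\<Union>V\<in>{V. open V \<and> q \<notin> V}. UNIV \<times> (V::'a set)))"
    by (intro open_Un open_UN ballI open_Times) auto
  ultimately show ?thesis by (metis closed_def double_complement)
qed

lemma entourage_cofinite:
  fixes F :: "('a::topological_space \<times> 'a) set"
  assumes "hausd TYPE('a)" "finite F" "sym F" "F \<inter> Id = {}"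
  shows "entourage (UNIV - F)"
proof -
  have "closed F"
  proof -
    have "F = (\<Union>z\<in>F. {z})" by blast
    moreover have "closed (\<Union>z\<in>F. {z})"
      using assms(2) closed_singleton_pair[OF assms(1)] by (intro closed_UN) auto
    ultimately show ?thesis by simp
  qed
  then have "open (UNIV - F)" by (simp add: open_Diff)
  moreover have "sym (UNIV - F)" using assms(3) unfolding sym_def by blast
  ultimately show ?thesis unfolding entourage_def using assms(4) by blast
qed

definition fip :: "'g set set \<Rightarrow> bool" where
  "fip M \<longleftrightarrow> (\<forall>X. finite X \<longrightarrow> X \<subseteq> M \<longrightarrow> \<Inter>X \<noteq> {})"

lemma chain_finite_sub:
  assumes "C \<in> chains A" "C \<noteq> {}" "finite X" "X \<subseteq> \<Union>C"
  shows "\<exists>c\<in>C. X \<subseteq> c"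
  using assms(3,4)
proof (induction X rule: finite_induct)
  case empty then show ?case using assms(2) by blast
next
  case (insert x F)
  have "F \<subseteq> \<Union>C" using insert.prems by simp
  from insert.IH[OF this] obtain c where c: "c \<in> C" "F \<subseteq> c" ..
  have "x \<in> \<Union>C" using insert.prems by simp
  then obtain d where d: "d \<in> C" "x \<in> d" ..
  from chainsD[OF assms(1) c(1) d(1)] show ?case
  proof
    assume "c \<subseteq> d" then show ?case using c d by (intro bexI[of _ d]) auto
  next
    assume "d \<subseteq> c" then show ?case using c d by (intro bexI[of _ c]) auto
  qed
qed

lemma ev_inf_principal: "finite X \<Longrightarrow> eventually P (Inf (principal ` X)) \<longleftrightarrow> (\<forall>g\<in>\<Inter>X. P g)"
  using INF_principal_finite[of X "\<lambda>x. x"] by (simp add: eventually_principal)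

lemma ultra_exists:
  fixes L :: "'g set" assumes "infinite L"
  obtains U :: "'g filter" where "U \<noteq> bot" "eventually (\<lambda>g. g\<in>L) U"
    "\<And>X. finite X \<Longrightarrow> eventually (\<lambda>g. g\<notin>X) U"
    "\<And>P. eventually P U \<or> eventually (\<lambda>g. \<not>P g) U"
proof -
  define base where "base = insert L {- X | X. finite X}"
  have fipb: "fip base"
    unfolding fip_def
  proof (intro allI impI)
    fix X assume X: "finite X" "X \<subseteq> base"
    define Y where "Y = X - {L}"
    have "\<forall>y\<in>Y. \<exists>Z. finite Z \<and> y = - Z" using X unfolding Y_def base_def by blast
    then obtain f where f: "\<forall>y\<in>Y. finite (f y) \<and> y = - f y" by metis
    have fin: "finite (\<Union>(f ` Y))" using f X(1) unfolding Y_def by auto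
    then have "infinite (L - \<Union>(f ` Y))" using assms by auto
    then obtain g where g: "g \<in> L" "g \<notin> \<Union>(f ` Y)" using infinite_imp_nonempty by blast
    have "g \<in> \<Inter>X"
    proof
      fix x assume "x \<in> X"
      show "g \<in> x"
      proof (cases "x = L")
        case True then show ?thesis using g by simp
      next
        case False then have "x \<in> Y" using \<open>x\<in>X\<close> unfolding Y_def by blast
        then show ?thesis using f g by blast
      qed
    qed
    then show "\<Inter>X \<noteq> {}" by blast
  qed
  define A where "A = {M. base \<subseteq> M \<and> fip M}"
  have "\<exists>M\<in>A. \<forall>X\<in>A. M \<subseteq> X \<longrightarrow> X = M"
  proof (rule Zorn_Lemma2, intro ballI)
    fix C assume C: "C \<in> chains A"
    show "\<exists>U\<in>A. \<forall>X\<in>C. X \<subseteq> U"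
    proof (cases "C = {}")
      case True then show ?thesis using fipb unfolding A_def by blast
    next
      case False
      have CA: "C \<subseteq> A" using chainsD2[OF C] .
      have "\<Union>C \<in> A" unfolding A_def
      proof safe
        fix x assume "x \<in> base"
        then show "x \<in> \<Union>C" using False CA unfolding A_def by blast
      next
        show "fip (\<Union>C)" unfolding fip_def
        proof (intro allI impI)
          fix X assume "finite X" "X \<subseteq> \<Union>C"
          then obtain c where "c \<in> C" "X \<subseteq> c" using chain_finite_sub[OF C False] by blast
          then show "\<Inter>X \<noteq> {}" using CA \<open>finite X\<close> unfolding A_def fip_def by blast
        qed
      qed
      then show ?thesis by blast
    qed
  qed
  then obtain M where M0: "M \<in> A" and maxM: "\<And>X. X \<in> A \<Longrightarrow> M \<subseteq> X \<Longrightarrow> X = M"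
    by (elim bexE) simp
  have M: "base \<subseteq> M" "fip M" using M0 unfolding A_def by simp_all
  define U where "U = Inf (principal ` M)"
  have evU: "eventually P U \<longleftrightarrow> (\<exists>X\<subseteq>M. finite X \<and> (\<forall>g\<in>\<Inter>X. P g))" for P
  proof -
    have e1: "eventually P U \<longleftrightarrow> (\<exists>X\<subseteq>M. finite X \<and> eventually P (Inf (principal ` X)))"
      unfolding U_def by (rule eventually_INF)
    show ?thesis unfolding e1
    proof
      assume "\<exists>X\<subseteq>M. finite X \<and> eventually P (Inf (principal ` X))"
      then obtain X where "X \<subseteq> M" "finite X" "eventually P (Inf (principal ` X))" by blast
      then have "\<forall>g\<in>\<Inter>X. P g" using ev_inf_principal[of X P] by simp
      then show "\<exists>X\<subseteq>M. finite X \<and> (\<forall>g\<in>\<Inter>X. P g)" using \<open>X \<subseteq> M\<close> \<open>finite X\<close> by (intro exI[of _ X] conjI)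
    next
      assume "\<exists>X\<subseteq>M. finite X \<and> (\<forall>g\<in>\<Inter>X. P g)"
      then obtain X where "X \<subseteq> M" "finite X" "\<forall>g\<in>\<Inter>X. P g" by blast
      then have "eventually P (Inf (principal ` X))" using ev_inf_principal[of X P] by simp
      then show "\<exists>X\<subseteq>M. finite X \<and> eventually P (Inf (principal ` X))" using \<open>X \<subseteq> M\<close> \<open>finite X\<close> by (intro exI[of _ X] conjI)
    qed
  qed
  have mem: "eventually (\<lambda>g. g \<in> b) U" if "b \<in> M" for b
    unfolding evU using that by (intro exI[of _ "{b}"]) auto
  show ?thesis
  proof
    show "U \<noteq> bot"
    proof
      assume "U = bot"
      then have "eventually (\<lambda>_. False) U" by simp
      then obtain X where "X \<subseteq> M" "finite X" "\<Inter>X = {}" unfolding evU by blast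
      then show False using M(2) unfolding fip_def by blast
    qed
    show "eventually (\<lambda>g. g\<in>L) U"
    proof -
      have "L \<in> base" unfolding base_def by (rule insertI1)
      then have "L \<in> M" by (rule subsetD[OF M(1)])
      from mem[OF this] show ?thesis by simp
    qed
    show "eventually (\<lambda>g. g\<notin>X) U" if "finite X" for X
    proof -
      have "- X \<in> {- X | X. finite X}" using that by auto
      then have "- X \<in> base" unfolding base_def by (rule insertI2)
      then have "- X \<in> M" by (rule subsetD[OF M(1)])
      from mem[OF this] show ?thesis by simp
    qed
    show "eventually P U \<or> eventually (\<lambda>g. \<not>P g) U" for P
    proof (cases "fip (insert {g. P g} M)")
      case True
      then have "insert {g. P g} M \<in> A" using M unfolding A_def by blast
      then have "insert {g. P g} M = M" using maxM by blast
      then have "{g. P g} \<in> M" by blast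
      then show ?thesis using mem by fastforce
    next
      case False
      then obtain X where X: "finite X" "X \<subseteq> insert {g. P g} M" "\<Inter>X = {}" unfolding fip_def by blast
      define Y where "Y = X - {{g. P g}}"
      have "Y \<subseteq> M" "finite Y" using X unfolding Y_def by auto
      moreover have "\<forall>g\<in>\<Inter>Y. \<not> P g"
      proof safe
        fix g assume "g \<in> \<Inter>Y" "P g"
        then have "g \<in> \<Inter>X" unfolding Y_def by blast
        then show False using X by blast
      qed
      ultimately show ?thesis unfolding evU by blast
    qed
  qed
qed

definition no3 :: "('a \<times> 'a) set \<Rightarrow> bool" where
  "no3 R \<longleftrightarrow> \<not>(\<exists>x1 x2 x3 y1 y2 y3. x1 \<noteq> x2 \<and> x1 \<noteq> x3 \<and> x2 \<noteq> x3 \<and> y1 \<noteq> y2 \<and> y1 \<noteq> y3 \<and> y2 \<noteq> y3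
      \<and> (x1, y1) \<in> R \<and> (x2, y2) \<in> R \<and> (x3, y3) \<in> R)"

lemma combB:
  fixes R :: "('a \<times> 'a) set"
  assumes tot: "\<forall>y. \<exists>x. (x, y) \<in> R"
    and three: "\<exists>x y z::'a. distinct [x, y, z]"
    and n3: "no3 R"
    and e: "(x1, y1) \<in> R" "(x2, y2) \<in> R" "(x3, y1) \<in> R" "x1 \<noteq> x2" "y1 \<noteq> y2" "x3 \<noteq> x1" "x3 \<noteq> x2"
  shows "\<exists>a b. \<forall>x y. (x, y) \<in> R \<longrightarrow> x = b \<or> y = a"
proof -
  have F: "False" if "(u1, v1) \<in> R" "(u2, v2) \<in> R" "(u3, v3) \<in> R" "u1 \<noteq> u2" "u1 \<noteq> u3" "u2 \<noteq> u3"
    "v1 \<noteq> v2" "v1 \<noteq> v3" "v2 \<noteq> v3" for u1 u2 u3 v1 v2 v3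
    using n3 that unfolding no3_def by blast
  have out: "x \<in> {x1, x2} \<or> y \<in> {y1, y2}" if "(x, y) \<in> R" for x y
    using F[OF e(1) e(2) that] e(4,5) by blast
  obtain y3 where y3: "y3 \<noteq> y1" "y3 \<noteq> y2"
    using three by (metis distinct_length_2_or_more distinct_singleton)
  obtain x0 where x0: "(x0, y3) \<in> R" using tot by blast
  then have x0': "x0 = x1 \<or> x0 = x2" using out y3 by blast
  show ?thesis
  proof (cases "\<exists>x4. x4 \<noteq> x1 \<and> x4 \<noteq> x2 \<and> (x4, y2) \<in> R")
    case True
    then obtain x4 where x4: "x4 \<noteq> x1" "x4 \<noteq> x2" "(x4, y2) \<in> R" by blast
    show ?thesis
    proof (cases "x0 = x1")
      case True
      then show ?thesis using F[OF e(3) x0 e(2)] e y3 by blast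
    next
      case False
      then have "x0 = x2" using x0' by blast
      then show ?thesis using F[OF x4(3) x0 e(1)] x4 e y3 by blast
    qed
  next
    case False
    then have lft: "y = y1" if "(x, y) \<in> R" "x \<noteq> x1" "x \<noteq> x2" for x y
      using out[OF that(1)] that by blast
    show ?thesis
    proof (cases "(x1, y2) \<in> R")
      case True
      have "x0 = x1 \<or> x0 = x2" by (rule x0')
      then show ?thesis
      proof
        assume "x0 = x1"
        then show ?thesis using F[OF e(3) x0 e(2)] e y3 by blast
      next
        assume "x0 = x2"
        then show ?thesis using F[OF e(3) True x0] e y3 by blast
      qed
    next
      case False
      have "\<forall>x y. (x, y) \<in> R \<longrightarrow> x = x2 \<or> y = y1"
      proof (intro allI impI)
        fix x y assume xy: "(x, y) \<in> R"
        show "x = x2 \<or> y = y1"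
        proof (cases "x = x1")
          case True
          show ?thesis
          proof (rule ccontr)
            assume "\<not> (x = x2 \<or> y = y1)"
            then have "y \<noteq> y1" by blast
            moreover have "y \<noteq> y2" using False xy True by blast
            ultimately show False using F[OF e(3) xy e(2)] True e by blast
          qed
        next
          case False
          then show ?thesis using lft xy by blast
        qed
      qed
      then show ?thesis by blast
    qed
  qed
qed

lemma comb:
  fixes R :: "('a \<times> 'a) set"
  assumes totl: "\<forall>x. \<exists>y. (x, y) \<in> R" and tot: "\<forall>y. \<exists>x. (x, y) \<in> R"
    and three: "\<exists>x y z::'a. distinct [x, y, z]"
    and n3: "no3 R"
  shows "\<exists>a b. \<forall>x y. (x, y) \<in> R \<longrightarrow> x = b \<or> y = a"
proof (cases "\<exists>x1 y1 x2 y2. (x1, y1) \<in> R \<and> (x2, y2) \<in> R \<and> x1 \<noteq> x2 \<and> y1 \<noteq> y2")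
  case False
  obtain x0 y0 where "(x0, y0) \<in> R" using totl by blast
  then have "\<forall>x y. (x, y) \<in> R \<longrightarrow> x = x0 \<or> y = y0" using False by blast
  then show ?thesis by blast
next
  case True
  then obtain x1 y1 x2 y2 where e: "(x1, y1) \<in> R" "(x2, y2) \<in> R" "x1 \<noteq> x2" "y1 \<noteq> y2" by blast
  have F: "False" if "(u1, v1) \<in> R" "(u2, v2) \<in> R" "(u3, v3) \<in> R" "u1 \<noteq> u2" "u1 \<noteq> u3" "u2 \<noteq> u3"
    "v1 \<noteq> v2" "v1 \<noteq> v3" "v2 \<noteq> v3" for u1 u2 u3 v1 v2 v3
    using n3 that unfolding no3_def by blast
  obtain x3 where x3: "x3 \<noteq> x1" "x3 \<noteq> x2"
    using three by (metis distinct_length_2_or_more distinct_singleton)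
  obtain w where w: "(x3, w) \<in> R" using totl by blast
  have "w = y1 \<or> w = y2"
  proof (rule ccontr)
    assume "\<not> (w = y1 \<or> w = y2)"
    then show False using F[OF e(1) e(2) w] e x3 by blast
  qed
  then show ?thesis
  proof
    assume "w = y1"
    then show ?thesis using combB[OF tot three n3 e(1) e(2) _ e(3) e(4) x3] w by blast
  next
    assume "w = y2"
    then show ?thesis using combB[OF tot three n3 e(2) e(1) _ _ _ x3(2) x3(1)] w e(3,4) by metis
  qed
qed

lemma nbhd_right:
  fixes f :: "'g \<Rightarrow> 'a::topological_space \<Rightarrow> 'a"
  assumes "compact D"
    and H: "\<forall>y\<in>D. \<exists>P Q. open P \<and> open Q \<and> x \<in> P \<and> y \<in> Q \<and> eventually (\<lambda>g. f g ` P \<inter> Q = {}) F"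
  shows "\<exists>M. open M \<and> x \<in> M \<and> eventually (\<lambda>g. f g ` M \<inter> D = {}) F"
proof -
  from bchoice[OF H] obtain P where P1: "\<forall>y\<in>D. \<exists>Q. open (P y) \<and> open Q \<and> x \<in> P y \<and> y \<in> Q \<and> eventually (\<lambda>g. f g ` P y \<inter> Q = {}) F" ..
  from bchoice[OF P1] obtain Q where PQ: "\<forall>y\<in>D. open (P y) \<and> open (Q y) \<and> x \<in> P y \<and> y \<in> Q y \<and> eventually (\<lambda>g. f g ` P y \<inter> Q y = {}) F" ..
  obtain D' where D': "D' \<subseteq> D" "finite D'" "D \<subseteq> (\<Union>y\<in>D'. Q y)"
    using compactE_image[OF assms(1), of D Q] PQ by blast
  define M where "M = (\<Inter>y\<in>D'. P y)"
  have "open M" unfolding M_def using D' PQ by (intro open_INT) auto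
  moreover have "x \<in> M" unfolding M_def using D' PQ by blast
  moreover have "eventually (\<lambda>g. \<forall>y\<in>D'. f g ` P y \<inter> Q y = {}) F"
    using D' PQ by (intro eventually_ball_finite) auto
  then have "eventually (\<lambda>g. f g ` M \<inter> D = {}) F"
  proof (rule eventually_mono)
    fix g assume a: "\<forall>y\<in>D'. f g ` P y \<inter> Q y = {}"
    show "f g ` M \<inter> D = {}"
    proof (rule ccontr)
      assume "f g ` M \<inter> D \<noteq> {}"
      then obtain z where z: "z \<in> M" "f g z \<in> D" by blast
      then obtain y where "y \<in> D'" "f g z \<in> Q y" using D'(3) by blast
      moreover have "z \<in> P y" using z(1) \<open>y \<in> D'\<close> unfolding M_def by blast
      ultimately show False using a by blast
    qed
  qed
  ultimately show ?thesis by blast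
qed

lemma nbhd_left:
  fixes f :: "'g \<Rightarrow> 'a::topological_space \<Rightarrow> 'a"
  assumes "compact C"
    and H: "\<forall>x\<in>C. \<exists>P Q. open P \<and> open Q \<and> x \<in> P \<and> y \<in> Q \<and> eventually (\<lambda>g. f g ` P \<inter> Q = {}) F"
  shows "\<exists>M. open M \<and> y \<in> M \<and> eventually (\<lambda>g. f g ` C \<inter> M = {}) F"
proof -
  from bchoice[OF H] obtain P where P1: "\<forall>x\<in>C. \<exists>Q. open (P x) \<and> open Q \<and> x \<in> P x \<and> y \<in> Q \<and> eventually (\<lambda>g. f g ` P x \<inter> Q = {}) F" ..
  from bchoice[OF P1] obtain Q where PQ: "\<forall>x\<in>C. open (P x) \<and> open (Q x) \<and> x \<in> P x \<and> y \<in> Q x \<and> eventually (\<lambda>g. f g ` P x \<inter> Q x = {}) F" ..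
  obtain C' where C': "C' \<subseteq> C" "finite C'" "C \<subseteq> (\<Union>x\<in>C'. P x)"
    using compactE_image[OF assms(1), of C P] PQ by blast
  define M where "M = (\<Inter>x\<in>C'. Q x)"
  have "open M" unfolding M_def using C' PQ by (intro open_INT) auto
  moreover have "y \<in> M" unfolding M_def using C' PQ by blast
  moreover have "eventually (\<lambda>g. \<forall>x\<in>C'. f g ` P x \<inter> Q x = {}) F"
    using C' PQ by (intro eventually_ball_finite) auto
  then have "eventually (\<lambda>g. f g ` C \<inter> M = {}) F"
  proof (rule eventually_mono)
    fix g assume a: "\<forall>x\<in>C'. f g ` P x \<inter> Q x = {}"
    show "f g ` C \<inter> M = {}"
    proof (rule ccontr)
      assume "f g ` C \<inter> M \<noteq> {}"
      then obtain z where z: "z \<in> C" "f g z \<in> M" by blast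
      then obtain x where "x \<in> C'" "z \<in> P x" using C'(3) by blast
      moreover have "f g z \<in> Q x" using z(2) \<open>x \<in> C'\<close> unfolding M_def by blast
      ultimately show False using a by blast
    qed
  qed
  ultimately show ?thesis by blast
qed

lemma nbhd_gen:
  fixes f :: "'g \<Rightarrow> 'a::topological_space \<Rightarrow> 'a"
  assumes "compact C"
    and H: "\<forall>x\<in>C. \<exists>P. open P \<and> x \<in> P \<and> eventually (\<lambda>g. f g ` P \<inter> Z = {}) F"
  shows "eventually (\<lambda>g. f g ` C \<inter> Z = {}) F"
proof -
  obtain P where PQ: "\<forall>x\<in>C. open (P x) \<and> x \<in> P x \<and> eventually (\<lambda>g. f g ` P x \<inter> Z = {}) F"
    using bchoice[OF H] by blast
  obtain C' where C': "C' \<subseteq> C" "finite C'" "C \<subseteq> (\<Union>x\<in>C'. P x)"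
    using compactE_image[OF assms(1), of C P] PQ by blast
  have "eventually (\<lambda>g. \<forall>x\<in>C'. f g ` P x \<inter> Z = {}) F"
    using C' PQ by (intro eventually_ball_finite) auto
  then show ?thesis
  proof (rule eventually_mono)
    fix g assume a: "\<forall>x\<in>C'. f g ` P x \<inter> Z = {}"
    show "f g ` C \<inter> Z = {}"
    proof (rule ccontr)
      assume "f g ` C \<inter> Z \<noteq> {}"
      then obtain z where z: "z \<in> C" "f g z \<in> Z" by blast
      then obtain x where "x \<in> C'" "z \<in> P x" using C'(3) by blast
      then show False using a z by blast
    qed
  qed
qed

lemma linked_sym: "linked e f \<Longrightarrow> linked f e"
  unfolding linked_def unlinked_def by (metis sup_commute)

lemma linked_of_triple:
  assumes "distinct [x, y, z]"
    and "\<And>p q. p \<in> {x, y, z} \<Longrightarrow> q \<in> {x, y, z} \<Longrightarrow> p \<noteq> q \<Longrightarrow> (p, q) \<notin> e \<and> (p, q) \<notin> f"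
  shows "linked e f"
  unfolding linked_def unlinked_def
proof
  assume "\<exists>a b. small e a \<and> small f b \<and> a \<union> b = UNIV"
  then obtain a b where ab: "small e a" "small f b" "a \<union> b = UNIV" by blast
  have d: "x \<noteq> y" "x \<noteq> z" "y \<noteq> z" using assms(1) by auto
  have ne: "(x, y) \<notin> e" "(x, z) \<notin> e" "(y, z) \<notin> e" "(x, y) \<notin> f" "(x, z) \<notin> f" "(y, z) \<notin> f"
    using assms(2)[of x y] assms(2)[of x z] assms(2)[of y z] d by auto
  have "x \<in> a \<or> x \<in> b" "y \<in> a \<or> y \<in> b" "z \<in> a \<or> z \<in> b" using ab(3) by auto
  then show False using ab(1,2) ne unfolding small_def by metis
qed

locale act_setup =
  fixes G :: "('g, 'b) monoid_scheme" (structure)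
    and \<phi> :: "'g \<Rightarrow> 'a::topological_space \<Rightarrow> 'a"
  assumes grp: "group G" and ga: "group_action G UNIV \<phi>"
    and cptU: "compact (UNIV :: 'a set)" and hs: "hausd TYPE('a)"
    and three: "\<exists>x y z::'a. distinct [x, y, z]"
begin

lemma phi1: "\<phi> \<one> x = x"
proof -
  have "(\<lambda>x\<in>UNIV. x) = \<phi> \<one>" by (rule group_action.id_eq_one[OF ga])
  then show ?thesis by (metis UNIV_I restrict_apply')
qed

lemma phim: "g \<in> carrier G \<Longrightarrow> h \<in> carrier G \<Longrightarrow> \<phi> (g \<otimes> h) x = \<phi> g (\<phi> h x)"
  by (rule group_action.composition_rule[OF ga UNIV_I])

lemma invc: "g \<in> carrier G \<Longrightarrow> inv g \<in> carrier G"
  by (rule group.inv_closed[OF grp])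

lemma phi_inv1: "g \<in> carrier G \<Longrightarrow> \<phi> (inv g) (\<phi> g x) = x"
  by (metis group.l_inv[OF grp] invc phi1 phim)

lemma phi_inv2: "g \<in> carrier G \<Longrightarrow> \<phi> g (\<phi> (inv g) x) = x"
  by (metis group.r_inv[OF grp] invc phi1 phim)

lemma phi_inj: "g \<in> carrier G \<Longrightarrow> \<phi> g x = \<phi> g y \<longleftrightarrow> x = y"
  by (metis phi_inv1)

lemma phi_surj: "g \<in> carrier G \<Longrightarrow> \<phi> g ` UNIV = UNIV"
  by (metis group_action.surj_prop[OF ga])

lemma ent_act_mem: "g \<in> carrier G \<Longrightarrow> (\<phi> g x, \<phi> g y) \<in> ent_act \<phi> g e \<longleftrightarrow> (x, y) \<in> e"
proof
  assume g: "g \<in> carrier G" and "(\<phi> g x, \<phi> g y) \<in> ent_act \<phi> g e"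
  then obtain p q where "(p, q) \<in> e" "\<phi> g x = \<phi> g p" "\<phi> g y = \<phi> g q"
    unfolding ent_act_def by auto
  then show "(x, y) \<in> e" using phi_inj[OF g] by simp
next
  assume "(x, y) \<in> e"
  then show "(\<phi> g x, \<phi> g y) \<in> ent_act \<phi> g e" unfolding ent_act_def by force
qed

lemma ent_act_mem2: "g \<in> carrier G \<Longrightarrow> (x, y) \<in> ent_act \<phi> g e \<longleftrightarrow> (\<phi> (inv g) x, \<phi> (inv g) y) \<in> e"
  by (metis ent_act_mem phi_inv2)

lemma ent_act_comp: "g \<in> carrier G \<Longrightarrow> h \<in> carrier G \<Longrightarrow> ent_act \<phi> g (ent_act \<phi> h e) = ent_act \<phi> (g \<otimes> h) e"
  unfolding ent_act_def image_image by (intro image_cong refl) (auto simp: phim split: prod.splits)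

lemma ent_act_one: "ent_act \<phi> \<one> e = e"
proof -
  have "(\<lambda>(x, y). (\<phi> \<one> x, \<phi> \<one> y)) = (\<lambda>z. z)" by (auto simp: phi1)
  then show ?thesis unfolding ent_act_def by simp
qed

lemma ent_act_inv: "g \<in> carrier G \<Longrightarrow> ent_act \<phi> (inv g) (ent_act \<phi> g e) = e"
  by (simp add: ent_act_comp invc group.l_inv[OF grp] ent_act_one)

lemma ent_act_inv2: "g \<in> carrier G \<Longrightarrow> ent_act \<phi> g (ent_act \<phi> (inv g) e) = e"
  by (simp add: ent_act_comp invc group.r_inv[OF grp] ent_act_one)

lemma unlinked_act:
  assumes g: "g \<in> carrier G" and u: "unlinked e f"
  shows "unlinked (ent_act \<phi> g e) (ent_act \<phi> g f)"
proof -
  obtain a b where ab: "small e a" "small f b" "a \<union> b = UNIV" using u unfolding unlinked_def by blast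
  have "small (ent_act \<phi> g e) (\<phi> g ` a)" using ab(1) unfolding small_def ent_act_def by force
  moreover have "small (ent_act \<phi> g f) (\<phi> g ` b)" using ab(2) unfolding small_def ent_act_def by force
  moreover have "\<phi> g ` a \<union> \<phi> g ` b = UNIV" using ab(3) phi_surj[OF g] by (metis image_Un)
  ultimately show ?thesis unfolding unlinked_def by blast
qed

lemma linked_act_iff:
  assumes g: "g \<in> carrier G"
  shows "linked (ent_act \<phi> g e) (ent_act \<phi> g f) \<longleftrightarrow> linked e f"
proof
  assume "linked (ent_act \<phi> g e) (ent_act \<phi> g f)"
  then show "linked e f" using unlinked_act[OF g] unfolding linked_def by blast
next
  assume "linked e f"
  show "linked (ent_act \<phi> g e) (ent_act \<phi> g f)"
    unfolding linked_def
  proof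
    assume "unlinked (ent_act \<phi> g e) (ent_act \<phi> g f)"
    from unlinked_act[OF invc[OF g] this] have "unlinked e f" unfolding ent_act_inv[OF g] .
    then show False using \<open>linked e f\<close> unfolding linked_def by simp
  qed
qed

end

context act_setup begin

lemma fin_linked:
  assumes d3: "three_discontinuous G \<phi>" and ee: "entourage e" and ee': "entourage e'"
  shows "finite {g \<in> carrier G. linked (ent_act \<phi> g e) e'}"
proof (rule ccontr)
  define L where "L = {g \<in> carrier G. linked (ent_act \<phi> g e) e'}"
  assume "infinite {g \<in> carrier G. linked (ent_act \<phi> g e) e'}"
  then have "infinite L" unfolding L_def .
  then obtain U :: "'g filter" where U: "U \<noteq> bot" "eventually (\<lambda>g. g\<in>L) U"
    "\<And>X. finite X \<Longrightarrow> eventually (\<lambda>g. g\<notin>X) U"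
    "\<And>P. eventually P U \<or> eventually (\<lambda>g. \<not>P g) U"
    using ultra_exists[OF \<open>infinite L\<close>] by blast
  have evC: "eventually (\<lambda>g. g \<in> carrier G) U"
    using U(2) by (rule eventually_mono) (simp add: L_def)
  have noF: "\<not> eventually (\<lambda>g. False) U" using U(1) by simp
  define Gam where "Gam = {(x, y). \<forall>P Q. open P \<longrightarrow> open Q \<longrightarrow> x \<in> P \<longrightarrow> y \<in> Q \<longrightarrow>
      \<not> eventually (\<lambda>g. \<phi> g ` P \<inter> Q = {}) U}"
  have notGam: "\<exists>P Q. open P \<and> open Q \<and> x \<in> P \<and> y \<in> Q \<and> eventually (\<lambda>g. \<phi> g ` P \<inter> Q = {}) U"
    if "(x, y) \<notin> Gam" for x y
    using that unfolding Gam_def by blast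
  have inGam: "eventually (\<lambda>g. \<phi> g ` P \<inter> Q \<noteq> {}) U"
    if "(x, y) \<in> Gam" "open P" "open Q" "x \<in> P" "y \<in> Q" for x y P Q
  proof -
    have "\<not> eventually (\<lambda>g. \<phi> g ` P \<inter> Q = {}) U" using that unfolding Gam_def by blast
    then show ?thesis using U(4)[of "\<lambda>g. \<phi> g ` P \<inter> Q = {}"] by blast
  qed
  have totl: "\<forall>x. \<exists>y. (x, y) \<in> Gam"
  proof (rule ccontr)
    assume "\<not> (\<forall>x. \<exists>y. (x, y) \<in> Gam)"
    then obtain x where x: "\<forall>y. (x, y) \<notin> Gam" by blast
    have "\<forall>y\<in>UNIV. \<exists>P Q. open P \<and> open Q \<and> x \<in> P \<and> y \<in> Q \<and> eventually (\<lambda>g. \<phi> g ` P \<inter> Q = {}) U"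
      using notGam x by blast
    from nbhd_right[OF cptU this] obtain M where M: "open M" "x \<in> M" "eventually (\<lambda>g. \<phi> g ` M \<inter> UNIV = {}) U"
      by blast
    have "eventually (\<lambda>g. False) U" using M(3) by (rule eventually_mono) (use M(2) in blast)
    then show False using noF by blast
  qed
  have totr: "\<forall>y. \<exists>x. (x, y) \<in> Gam"
  proof (rule ccontr)
    assume "\<not> (\<forall>y. \<exists>x. (x, y) \<in> Gam)"
    then obtain y where y: "\<forall>x. (x, y) \<notin> Gam" by blast
    have "\<forall>x\<in>UNIV. \<exists>P Q. open P \<and> open Q \<and> x \<in> P \<and> y \<in> Q \<and> eventually (\<lambda>g. \<phi> g ` P \<inter> Q = {}) U"
      using notGam y by blast
    from nbhd_left[OF cptU this] obtain M where M: "open M" "y \<in> M" "eventually (\<lambda>g. \<phi> g ` UNIV \<inter> M = {}) U"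
      by blast
    have "eventually (\<lambda>g. False) U" using eventually_conj[OF M(3) evC]
    proof (rule eventually_mono)
      fix g assume "\<phi> g ` UNIV \<inter> M = {} \<and> g \<in> carrier G"
      then show False using phi_surj M(2) by auto
    qed
    then show False using noF by blast
  qed
  have n3: "no3 Gam"
    unfolding no3_def
  proof
    assume "\<exists>x1 x2 x3 y1 y2 y3. x1 \<noteq> x2 \<and> x1 \<noteq> x3 \<and> x2 \<noteq> x3 \<and> y1 \<noteq> y2 \<and> y1 \<noteq> y3 \<and> y2 \<noteq> y3
      \<and> (x1, y1) \<in> Gam \<and> (x2, y2) \<in> Gam \<and> (x3, y3) \<in> Gam"
    then obtain x1 x2 x3 y1 y2 y3 where xy: "distinct [x1, x2, x3]" "distinct [y1, y2, y3]"
      "(x1, y1) \<in> Gam" "(x2, y2) \<in> Gam" "(x3, y3) \<in> Gam" by auto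
    obtain N1 N2 N3 C1 C2 C3 where N: "open N1" "open N2" "open N3" "closed C1" "closed C2" "closed C3"
      "x1 \<in> N1" "x2 \<in> N2" "x3 \<in> N3" "N1 \<subseteq> C1" "N2 \<subseteq> C2" "N3 \<subseteq> C3"
      "C1 \<inter> C2 = {}" "C1 \<inter> C3 = {}" "C2 \<inter> C3 = {}"
      by (rule three_sep[OF cptU hs xy(1)])
    obtain M1 M2 M3 D1 D2 D3 where M: "open M1" "open M2" "open M3" "closed D1" "closed D2" "closed D3"
      "y1 \<in> M1" "y2 \<in> M2" "y3 \<in> M3" "M1 \<subseteq> D1" "M2 \<subseteq> D2" "M3 \<subseteq> D3"
      "D1 \<inter> D2 = {}" "D1 \<inter> D3 = {}" "D2 \<inter> D3 = {}"
      by (rule three_sep[OF cptU hs xy(2)])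
    have cp: "compact C" if "closed C" for C :: "'a set"
      using compact_Int_closed[OF cptU that] by simp
    define K where "K = tri C1 C2 C3 \<union> tri D1 D2 D3"
    have "compactin theta3_top K" unfolding K_def
      by (intro compactin_Un compactin_tri cp N M)
    then have finX: "finite {g \<in> carrier G. set_act \<phi> g ` K \<inter> K \<noteq> {}}"
      using d3 unfolding three_discontinuous_def by blast
    have e1: "eventually (\<lambda>g. \<phi> g ` N1 \<inter> M1 \<noteq> {}) U" using inGam[OF xy(3) N(1) M(1) N(7) M(7)] .
    have e2: "eventually (\<lambda>g. \<phi> g ` N2 \<inter> M2 \<noteq> {}) U" using inGam[OF xy(4) N(2) M(2) N(8) M(8)] .
    have e3: "eventually (\<lambda>g. \<phi> g ` N3 \<inter> M3 \<noteq> {}) U" using inGam[OF xy(5) N(3) M(3) N(9) M(9)] .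
    have eX: "eventually (\<lambda>g. g \<notin> {g \<in> carrier G. set_act \<phi> g ` K \<inter> K \<noteq> {}}) U" using U(3)[OF finX] .
    have "eventually (\<lambda>g. False) U"
      using eventually_conj[OF e1 eventually_conj[OF e2 eventually_conj[OF e3 eventually_conj[OF eX evC]]]]
    proof (rule eventually_mono)
      fix g assume a: "\<phi> g ` N1 \<inter> M1 \<noteq> {} \<and> \<phi> g ` N2 \<inter> M2 \<noteq> {} \<and> \<phi> g ` N3 \<inter> M3 \<noteq> {} \<and>
        g \<notin> {g \<in> carrier G. set_act \<phi> g ` K \<inter> K \<noteq> {}} \<and> g \<in> carrier G"
      obtain a1 where a1: "a1 \<in> N1" "\<phi> g a1 \<in> M1" using a by blast
      obtain a2 where a2: "a2 \<in> N2" "\<phi> g a2 \<in> M2" using a by blast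
      obtain a3 where a3: "a3 \<in> N3" "\<phi> g a3 \<in> M3" using a by blast
      have t1: "{a1, a2, a3} \<in> K" unfolding K_def using a1 a2 a3 N(10-12) by (intro UnI1 triI) auto
      have t2: "{\<phi> g a1, \<phi> g a2, \<phi> g a3} \<in> K" unfolding K_def using a1 a2 a3 M(10-12) by (intro UnI2 triI) auto
      have "set_act \<phi> g {a1, a2, a3} = {\<phi> g a1, \<phi> g a2, \<phi> g a3}" unfolding set_act_def by simp
      then have "set_act \<phi> g ` K \<inter> K \<noteq> {}" using t1 t2 by blast
      then show False using a by blast
    qed
    then show False using noF by blast
  qed
  obtain a b where ab: "\<forall>x y. (x, y) \<in> Gam \<longrightarrow> x = b \<or> y = a"
    using comb[OF totl totr three n3] by blast
  obtain Ue where Ue: "open Ue" "Id \<subseteq> Ue" "Ue \<subseteq> e" using ee unfolding entourage_def by blast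
  obtain Ue' where Ue': "open Ue'" "Id \<subseteq> Ue'" "Ue' \<subseteq> e'" using ee' unfolding entourage_def by blast
  have "(b, b) \<in> Ue" using Ue(2) by blast
  then obtain A1 B1 where AB1: "open A1" "open B1" "(b, b) \<in> A1 \<times> B1" "A1 \<times> B1 \<subseteq> Ue"
    using open_prod_elim[OF Ue(1)] by metis
  have "(a, a) \<in> Ue'" using Ue'(2) by blast
  then obtain A2 B2 where AB2: "open A2" "open B2" "(a, a) \<in> A2 \<times> B2" "A2 \<times> B2 \<subseteq> Ue'"
    using open_prod_elim[OF Ue'(1)] by metis
  define N where "N = A1 \<inter> B1"
  define N' where "N' = A2 \<inter> B2"
  have N: "open N" "b \<in> N" "N \<times> N \<subseteq> e" unfolding N_def using AB1 Ue(3) by auto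
  have N': "open N'" "a \<in> N'" "N' \<times> N' \<subseteq> e'" unfolding N'_def using AB2 Ue'(3) by auto
  have cC: "compact (- N)" using compact_Int_closed[OF cptU, of "- N"] N(1) by (simp add: closed_Compl)
  have cD: "compact (- N')" using compact_Int_closed[OF cptU, of "- N'"] N'(1) by (simp add: closed_Compl)
  have "\<forall>x\<in>- N. \<exists>P. open P \<and> x \<in> P \<and> eventually (\<lambda>g. \<phi> g ` P \<inter> - N' = {}) U"
  proof
    fix x assume x: "x \<in> - N"
    have "\<forall>y\<in>- N'. \<exists>P Q. open P \<and> open Q \<and> x \<in> P \<and> y \<in> Q \<and> eventually (\<lambda>g. \<phi> g ` P \<inter> Q = {}) U"
    proof
      fix y assume y: "y \<in> - N'"
      have "x \<noteq> b" "y \<noteq> a" using x y N(2) N'(2) by auto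
      then have "(x, y) \<notin> Gam" using ab by blast
      then show "\<exists>P Q. open P \<and> open Q \<and> x \<in> P \<and> y \<in> Q \<and> eventually (\<lambda>g. \<phi> g ` P \<inter> Q = {}) U"
        by (rule notGam)
    qed
    from nbhd_right[OF cD this] show "\<exists>P. open P \<and> x \<in> P \<and> eventually (\<lambda>g. \<phi> g ` P \<inter> - N' = {}) U" .
  qed
  from nbhd_gen[OF cC this] have evD: "eventually (\<lambda>g. \<phi> g ` (- N) \<inter> - N' = {}) U" .
  have "eventually (\<lambda>g. False) U"
    using eventually_conj[OF evD eventually_conj[OF U(2) evC]]
  proof (rule eventually_mono)
    fix g assume a: "\<phi> g ` (- N) \<inter> - N' = {} \<and> g \<in> L \<and> g \<in> carrier G"
    have s1: "small (ent_act \<phi> g e) (\<phi> g ` N)"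
      unfolding small_def ent_act_def using N(3) by force
    have s2: "small e' N'" unfolding small_def using N'(3) by blast
    have cov: "\<phi> g ` N \<union> N' = UNIV"
    proof -
      have "z \<in> \<phi> g ` N \<union> N'" for z
      proof -
        obtain w where w: "z = \<phi> g w" using phi_surj[of g] a by (metis UNIV_I imageE)
        show ?thesis
        proof (cases "w \<in> N")
          case True then show ?thesis using w by blast
        next
          case False then have "z \<in> \<phi> g ` (- N)" using w by blast
          then show ?thesis using a by blast
        qed
      qed
      then show ?thesis by blast
    qed
    have "unlinked (ent_act \<phi> g e) e'" unfolding unlinked_def using s1 s2 cov by blast
    moreover have "linked (ent_act \<phi> g e) e'" using a unfolding L_def by blast
    ultimately show False unfolding linked_def by blast
  qed
  then show False using noF by blast
qed

end

context act_setup begin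

lemma oneC: "\<one> \<in> carrier G" using monoid.one_closed[OF group.is_monoid[OF grp]] .

lemma mC: "g \<in> carrier G \<Longrightarrow> h \<in> carrier G \<Longrightarrow> g \<otimes> h \<in> carrier G"
  using monoid.m_closed[OF group.is_monoid[OF grp]] .

lemma cancel1: "k \<in> carrier G \<Longrightarrow> h \<in> carrier G \<Longrightarrow> k \<otimes> (inv k \<otimes> h) = h"
  by (metis invc monoid.m_assoc[OF group.is_monoid[OF grp]] group.r_inv[OF grp] monoid.l_one[OF group.is_monoid[OF grp]])

lemma fg_of_A:
  assumes d3: "three_discontinuous G \<phi>"
    and Ane: "A \<noteq> {}" and Aent: "\<forall>e\<in>A. entourage e \<and> self_linked e"
    and Ainv: "\<forall>g\<in>carrier G. \<forall>e\<in>A. ent_act \<phi> g e \<in> A"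
    and Afin: "finite (ent_orbit G \<phi> ` A)"
    and Acon: "Gamma_connected A"
  shows "finitely_generated G"
proof -
  obtain R where R: "R \<subseteq> A" "finite R" "ent_orbit G \<phi> ` A = ent_orbit G \<phi> ` R"
    using finite_subset_image[OF Afin subset_refl] by blast
  have rep: "\<exists>r\<in>R. \<exists>h\<in>carrier G. e = ent_act \<phi> h r" if "e \<in> A" for e
  proof -
    have e1: "e \<in> ent_orbit G \<phi> e" unfolding ent_orbit_def
      using ent_act_one[of e] oneC by (metis image_eqI)
    have "ent_orbit G \<phi> e \<in> ent_orbit G \<phi> ` R" using R(3) that by (metis imageI)
    then obtain r where r: "r \<in> R" "ent_orbit G \<phi> e = ent_orbit G \<phi> r" by (rule imageE) simp
    have "e \<in> ent_orbit G \<phi> r" using e1 r(2) by simp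
    then have "e \<in> (\<lambda>g. ent_act \<phi> g r) ` carrier G" unfolding ent_orbit_def .
    then obtain h where "h \<in> carrier G" "e = ent_act \<phi> h r" by (rule imageE) simp
    then show ?thesis using r(1) by (intro bexI[of _ r] bexI[of _ h])
  qed
  define S where "S = (\<Union>r\<in>R. \<Union>r'\<in>R. {g \<in> carrier G. linked (ent_act \<phi> g r) r'})"
  have finS: "finite S" unfolding S_def
  proof (intro finite_UN_I R(2))
    fix r r' assume "r \<in> R" "r' \<in> R"
    then have "entourage r" "entourage r'" using R(1) Aent by auto
    then show "finite {g \<in> carrier G. linked (ent_act \<phi> g r) r'}" by (rule fin_linked[OF d3])
  qed
  have SC: "S \<subseteq> carrier G" unfolding S_def by blast
  have Sm: "g \<in> S" if "g \<in> carrier G" "r \<in> R" "r' \<in> R" "linked (ent_act \<phi> g r) r'" for g r r'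
    unfolding S_def using that by blast
  from Ane R have "R \<noteq> {}" by auto
  then obtain r0 where r0: "r0 \<in> R" by blast
  define E where "E = Gamma_edges A"
  have key: "\<forall>h\<in>carrier G. \<forall>r\<in>R. c = ent_act \<phi> h r \<longrightarrow> h \<in> generate G S"
    if "(r0, c) \<in> E\<^sup>*" for c
    using that
  proof (induction rule: rtrancl_induct)
    case base
    show ?case
    proof (intro ballI impI)
      fix h r assume h: "h \<in> carrier G" "r \<in> R" "r0 = ent_act \<phi> h r"
      have "self_linked r0" using Aent R(1) r0 by blast
      then have "linked (ent_act \<phi> h r) r0" using h(3) unfolding self_linked_def by simp
      then have "h \<in> S" using Sm h r0 by blast
      then show "h \<in> generate G S" by (rule generate.incl)
    qed
  next
    case (step b c)
    show ?case
    proof (intro ballI impI)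
      fix h r assume h: "h \<in> carrier G" "r \<in> R" "c = ent_act \<phi> h r"
      have bA: "b \<in> A" and lbc: "linked b c" using step(2) unfolding E_def Gamma_edges_def by auto
      obtain r' k where k: "r' \<in> R" "k \<in> carrier G" "b = ent_act \<phi> k r'" using rep[OF bA] by blast
      have kg: "k \<in> generate G S" using step(3) k by blast
      define m where "m = inv k \<otimes> h"
      have mC: "m \<in> carrier G" unfolding m_def using h(1) k(2) invc by (intro mC invc)
      have "linked (ent_act \<phi> (inv k) b) (ent_act \<phi> (inv k) c)"
        using lbc linked_act_iff[OF invc[OF k(2)]] by simp
      moreover have "ent_act \<phi> (inv k) b = r'" using k(3) ent_act_inv[OF k(2)] by simp
      moreover have "ent_act \<phi> (inv k) c = ent_act \<phi> m r"
        unfolding m_def h(3) using ent_act_comp[OF invc[OF k(2)] h(1)] by simp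
      ultimately have "linked (ent_act \<phi> m r) r'" using linked_sym by simp
      then have "m \<in> S" using Sm mC h(2) k(1) by blast
      then have "m \<in> generate G S" by (rule generate.incl)
      then have "k \<otimes> m \<in> generate G S" using kg by (intro generate.eng)
      moreover have "k \<otimes> m = h" unfolding m_def using k(2) h(1)
        by (rule cancel1)
      ultimately show "h \<in> generate G S" by simp
    qed
  qed
  have "carrier G \<subseteq> generate G S"
  proof
    fix g assume g: "g \<in> carrier G"
    have "r0 \<in> A" using R(1) r0 by blast
    then have cA: "ent_act \<phi> g r0 \<in> A" using Ainv g by blast
    have "(r0, ent_act \<phi> g r0) \<in> E\<^sup>*" using Acon \<open>r0 \<in> A\<close> cA unfolding Gamma_connected_def E_def by blast
    then show "g \<in> generate G S" using key g r0 by blast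
  qed
  moreover have "generate G S \<subseteq> carrier G" using group.generate_incl[OF grp SC] .
  ultimately show ?thesis unfolding finitely_generated_def using finS SC by blast
qed

end

context act_setup begin

lemma ent_act_diff: "g \<in> carrier G \<Longrightarrow> ent_act \<phi> g (UNIV - F) = UNIV - ent_act \<phi> g F"
proof (intro equalityI subsetI)
  fix z assume g: "g \<in> carrier G" and z: "z \<in> ent_act \<phi> g (UNIV - F)"
  obtain p q where pq: "z = (p, q)" by force
  have "(\<phi> (inv g) p, \<phi> (inv g) q) \<in> UNIV - F" using z pq ent_act_mem2[OF g] by simp
  then have "(\<phi> (inv g) p, \<phi> (inv g) q) \<notin> F" by simp
  then have "(p, q) \<notin> ent_act \<phi> g F" using ent_act_mem2[OF g] by simp
  then show "z \<in> UNIV - ent_act \<phi> g F" using pq by simp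
next
  fix z assume g: "g \<in> carrier G" and z: "z \<in> UNIV - ent_act \<phi> g F"
  obtain p q where pq: "z = (p, q)" by force
  have "(p, q) \<notin> ent_act \<phi> g F" using z pq by simp
  then have "(\<phi> (inv g) p, \<phi> (inv g) q) \<notin> F" using ent_act_mem2[OF g] by simp
  then have "(\<phi> (inv g) p, \<phi> (inv g) q) \<in> UNIV - F" by simp
  then show "z \<in> ent_act \<phi> g (UNIV - F)" using ent_act_mem2[OF g] pq by simp
qed

lemma ent_act_props:
  assumes g: "g \<in> carrier G" and F: "finite F" "sym F" "F \<inter> Id = {}"
  shows "finite (ent_act \<phi> g F)" "sym (ent_act \<phi> g F)" "ent_act \<phi> g F \<inter> Id = {}"
proof -
  show "finite (ent_act \<phi> g F)" unfolding ent_act_def using F(1) by simp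
  show "sym (ent_act \<phi> g F)" unfolding sym_def
  proof (intro allI impI)
    fix x y assume "(x, y) \<in> ent_act \<phi> g F"
    then have "(\<phi> (inv g) x, \<phi> (inv g) y) \<in> F" using ent_act_mem2[OF g] by simp
    then have "(\<phi> (inv g) y, \<phi> (inv g) x) \<in> F" using F(2) unfolding sym_def by blast
    then show "(y, x) \<in> ent_act \<phi> g F" using ent_act_mem2[OF g] by simp
  qed
  show "ent_act \<phi> g F \<inter> Id = {}"
  proof (rule ccontr)
    assume "ent_act \<phi> g F \<inter> Id \<noteq> {}"
    then obtain x where "(x, x) \<in> ent_act \<phi> g F" by auto
    then have "(\<phi> (inv g) x, \<phi> (inv g) x) \<in> F" using ent_act_mem2[OF g] by simp
    then show False using F(3) by auto
  qed
qed

lemma A_of_fg: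
  assumes fg: "finitely_generated G"
  shows "\<exists>A. A \<noteq> {} \<and> (\<forall>e\<in>A. entourage e \<and> self_linked e)
       \<and> (\<forall>g\<in>carrier G. \<forall>e\<in>A. ent_act \<phi> g e \<in> A)
       \<and> finite (ent_orbit G \<phi> ` A)
       \<and> Gamma_connected A"
proof -
  obtain S where S: "finite S" "S \<subseteq> carrier G" "generate G S = carrier G"
    using fg unfolding finitely_generated_def by blast
  obtain x y z :: 'a where xyz: "distinct [x, y, z]" using three by blast
  define T where "T = {x, y, z}"
  define P0 where "P0 = {(p, q). p \<in> T \<and> q \<in> T \<and> p \<noteq> q}"
  have P0f: "finite P0" "sym P0" "P0 \<inter> Id = {}"
  proof -
    have "P0 \<subseteq> T \<times> T" unfolding P0_def by auto
    then show "finite P0" unfolding T_def by (rule finite_subset) simp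
    show "sym P0" unfolding sym_def P0_def by auto
    show "P0 \<inter> Id = {}" unfolding P0_def by auto
  qed
  define F0 where "F0 = P0 \<union> (\<Union>s\<in>S. ent_act \<phi> (inv s) P0)"
  have sinv: "inv s \<in> carrier G" if "s \<in> S" for s using S(2) that invc by blast
  have F0: "finite F0" "sym F0" "F0 \<inter> Id = {}"
  proof -
    show "finite F0" unfolding F0_def using S(1) P0f ent_act_props(1)[OF sinv] by auto
    have hs: "sym (ent_act \<phi> (inv s) P0)" if "s \<in> S" for s using ent_act_props(2)[OF sinv[OF that] P0f] .
    show "sym F0" unfolding F0_def by (intro sym_Un P0f(2) sym_UNION ballI hs)
    have hi: "ent_act \<phi> (inv s) P0 \<inter> Id = {}" if "s \<in> S" for s using ent_act_props(3)[OF sinv[OF that] P0f] .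
    show "F0 \<inter> Id = {}"
    proof (rule equals0I)
      fix w assume w: "w \<in> F0 \<inter> Id"
      then have wF: "w \<in> F0" and wI: "w \<in> Id" by auto
      from wF[unfolded F0_def] show False
      proof (elim UnE UN_E)
        assume "w \<in> P0" then show False using P0f(3) wI by (metis IntI empty_iff)
      next
        fix s assume "s \<in> S" "w \<in> ent_act \<phi> (inv s) P0"
        then show False using hi[OF \<open>s \<in> S\<close>] wI by (metis IntI empty_iff)
      qed
    qed
  qed
  define u where "u = UNIV - F0"
  have uent: "entourage (ent_act \<phi> g u)" if g: "g \<in> carrier G" for g
  proof -
    have "ent_act \<phi> g u = UNIV - ent_act \<phi> g F0" unfolding u_def by (rule ent_act_diff[OF g])
    moreover have "entourage (UNIV - ent_act \<phi> g F0)"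
      using entourage_cofinite[OF hs ent_act_props[OF g F0]] .
    ultimately show ?thesis by simp
  qed
  have notu: "(p, q) \<notin> u" if "(p, q) \<in> P0" for p q using that unfolding u_def F0_def by blast
  have notsu: "(p, q) \<notin> ent_act \<phi> s u" if "(p, q) \<in> P0" "s \<in> S" for p q s
  proof -
    have sC: "s \<in> carrier G" using S(2) that(2) by blast
    have "(\<phi> (inv s) p, \<phi> (inv s) q) \<in> ent_act \<phi> (inv s) P0" using that(1) ent_act_mem[OF sinv[OF that(2)]] by blast
    then have "(\<phi> (inv s) p, \<phi> (inv s) q) \<notin> u" unfolding u_def F0_def using that(2) by blast
    then show ?thesis using ent_act_mem2[OF sC] by simp
  qed
  have Tg: "(p, q) \<notin> ent_act \<phi> g e"
    if g: "g \<in> carrier G" and pq: "p \<in> \<phi> g ` T" "q \<in> \<phi> g ` T" "p \<noteq> q" and ne: "\<And>p q. (p, q) \<in> P0 \<Longrightarrow> (p, q) \<notin> e"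
    for g e p q
  proof -
    obtain p0 q0 where "p0 \<in> T" "q0 \<in> T" "p = \<phi> g p0" "q = \<phi> g q0" using pq by blast
    moreover then have "p0 \<noteq> q0" using pq(3) by blast
    ultimately show ?thesis using ne[of p0 q0] ent_act_mem[OF g] unfolding P0_def by simp
  qed
  have dT: "distinct [\<phi> g x, \<phi> g y, \<phi> g z]" if "g \<in> carrier G" for g
    using xyz phi_inj[OF that] by auto
  have Tg_eq: "\<phi> g ` T = {\<phi> g x, \<phi> g y, \<phi> g z}" for g unfolding T_def by simp
  define A where "A = ent_orbit G \<phi> u"
  have Aeq: "A = (\<lambda>g. ent_act \<phi> g u) ` carrier G" unfolding A_def ent_orbit_def ..
  have self: "self_linked (ent_act \<phi> g u)" if g: "g \<in> carrier G" for g
    unfolding self_linked_def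
  proof (rule linked_of_triple[OF dT[OF g]])
    fix p q assume "p \<in> {\<phi> g x, \<phi> g y, \<phi> g z}" "q \<in> {\<phi> g x, \<phi> g y, \<phi> g z}" "p \<noteq> q"
    then have "(p, q) \<notin> ent_act \<phi> g u" using Tg[OF g, of p q u] notu unfolding Tg_eq by blast
    then show "(p, q) \<notin> ent_act \<phi> g u \<and> (p, q) \<notin> ent_act \<phi> g u" by simp
  qed
  have inv_closed: "ent_act \<phi> h e \<in> A" if hC: "h \<in> carrier G" and eA: "e \<in> A" for h e
  proof -
    obtain g where g: "g \<in> carrier G" "e = ent_act \<phi> g u" using eA unfolding Aeq by blast
    then have "ent_act \<phi> h e = ent_act \<phi> (h \<otimes> g) u" using ent_act_comp[OF hC g(1)] by simp
    then show ?thesis unfolding Aeq using mC[OF hC g(1)] by blast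
  qed
  have orb: "ent_orbit G \<phi> e = A" if eA: "e \<in> A" for e
  proof
    show "ent_orbit G \<phi> e \<subseteq> A" unfolding ent_orbit_def using inv_closed eA by blast
    obtain g where g: "g \<in> carrier G" "e = ent_act \<phi> g u" using eA unfolding Aeq by blast
    show "A \<subseteq> ent_orbit G \<phi> e"
    proof
      fix a assume "a \<in> A"
      then obtain h where h: "h \<in> carrier G" "a = ent_act \<phi> h u" unfolding Aeq by blast
      have hC: "h \<otimes> inv g \<in> carrier G" using mC[OF h(1) invc[OF g(1)]] .
      have "ent_act \<phi> (h \<otimes> inv g) e = ent_act \<phi> ((h \<otimes> inv g) \<otimes> g) u"
        unfolding g(2) using ent_act_comp[OF hC g(1)] by simp
      also have "(h \<otimes> inv g) \<otimes> g = h"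
        by (metis g(1) h(1) invc monoid.m_assoc[OF group.is_monoid[OF grp]] group.l_inv[OF grp] monoid.r_one[OF group.is_monoid[OF grp]])
      finally have "a = ent_act \<phi> (h \<otimes> inv g) e" using h(2) by simp
      then show "a \<in> ent_orbit G \<phi> e" unfolding ent_orbit_def using hC by blast
    qed
  qed
  have uA: "u \<in> A" unfolding Aeq using ent_act_one[of u] oneC by (metis image_eqI)
  define E where "E = Gamma_edges A"
  have Eact: "(ent_act \<phi> h a, ent_act \<phi> h b) \<in> E" if "(a, b) \<in> E" "h \<in> carrier G" for a b h
  proof -
    have ab: "a \<in> A" "b \<in> A" "a \<noteq> b" "linked a b" using that(1) unfolding E_def Gamma_edges_def by auto
    have "ent_act \<phi> h a \<noteq> ent_act \<phi> h b" using ab(3) ent_act_inv[OF that(2)] by metis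
    moreover have "linked (ent_act \<phi> h a) (ent_act \<phi> h b)" using ab(4) linked_act_iff[OF that(2)] by simp
    ultimately show ?thesis unfolding E_def Gamma_edges_def using inv_closed[OF that(2) ab(1)] inv_closed[OF that(2) ab(2)] by blast
  qed
  have Ertact: "(ent_act \<phi> h a, ent_act \<phi> h b) \<in> E\<^sup>*" if "(a, b) \<in> E\<^sup>*" "h \<in> carrier G" for a b h
    using that(1)
  proof (induction rule: rtrancl_induct)
    case base then show ?case by simp
  next
    case (step b c)
    then show ?case using Eact[OF step(2) that(2)] by (meson rtrancl.rtrancl_into_rtrancl)
  qed
  have Esym: "(b, a) \<in> E" if "(a, b) \<in> E" for a b
    using that linked_sym unfolding E_def Gamma_edges_def by blast
  have Ertsym: "(b, a) \<in> E\<^sup>*" if "(a, b) \<in> E\<^sup>*" for a b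
    using that
  proof (induction rule: rtrancl_induct)
    case base then show ?case by simp
  next
    case (step b c)
    then show ?case using Esym[OF step(2)] by (meson converse_rtrancl_into_rtrancl)
  qed
  have sstep: "(u, ent_act \<phi> s u) \<in> E\<^sup>*" if "s \<in> S" for s
  proof (cases "u = ent_act \<phi> s u")
    case True then show ?thesis by (metis rtrancl.rtrancl_refl)
  next
    case False
    have sC: "s \<in> carrier G" using S(2) that by blast
    have "linked u (ent_act \<phi> s u)"
    proof (rule linked_of_triple[OF xyz])
      fix p q assume "p \<in> {x, y, z}" "q \<in> {x, y, z}" "p \<noteq> q"
      then have "(p, q) \<in> P0" unfolding P0_def T_def by simp
      then show "(p, q) \<notin> u \<and> (p, q) \<notin> ent_act \<phi> s u" using notu notsu[OF _ that] by blast
    qed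
    moreover have "ent_act \<phi> s u \<in> A" using inv_closed[OF sC uA] .
    ultimately have "(u, ent_act \<phi> s u) \<in> E" unfolding E_def Gamma_edges_def using uA False by blast
    then show ?thesis by (rule r_into_rtrancl)
  qed
  have conn: "(u, ent_act \<phi> g u) \<in> E\<^sup>*" if "g \<in> generate G S" for g
    using that
  proof (induction rule: generate.induct)
    case one then show ?case using ent_act_one by simp
  next
    case (incl h) then show ?case by (rule sstep)
  next
    case (inv h)
    have hC: "h \<in> carrier G" using S(2) inv by blast
    have "(ent_act \<phi> (inv h) u, ent_act \<phi> (inv h) (ent_act \<phi> h u)) \<in> E\<^sup>*"
      using Ertact[OF sstep[OF inv] invc[OF hC]] .
    then have "(ent_act \<phi> (inv h) u, u) \<in> E\<^sup>*" using ent_act_inv[OF hC] by simp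
    then show ?case by (rule Ertsym)
  next
    case (eng h1 h2)
    have gc: "generate G S \<subseteq> carrier G" using group.generate_incl[OF grp S(2)] .
    have h1C: "h1 \<in> carrier G" and h2C: "h2 \<in> carrier G" using eng(1,2) gc by blast+
    have "(ent_act \<phi> h1 u, ent_act \<phi> h1 (ent_act \<phi> h2 u)) \<in> E\<^sup>*" using Ertact[OF eng(4) h1C] .
    then have "(ent_act \<phi> h1 u, ent_act \<phi> (h1 \<otimes> h2) u) \<in> E\<^sup>*" using ent_act_comp[OF h1C h2C] by simp
    then show ?case using eng(3) by (meson rtrancl_trans)
  qed
  show ?thesis
  proof (intro exI[of _ A] conjI)
    show "A \<noteq> {}" using uA by blast
    show "\<forall>e\<in>A. entourage e \<and> self_linked e" unfolding Aeq using uent self by blast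
    show "\<forall>g\<in>carrier G. \<forall>e\<in>A. ent_act \<phi> g e \<in> A" using inv_closed by blast
    have "ent_orbit G \<phi> ` A \<subseteq> {A}" using orb by blast
    then show "finite (ent_orbit G \<phi> ` A)" by (rule finite_subset) simp
    show "Gamma_connected A" unfolding Gamma_connected_def
    proof (intro ballI)
      fix a b assume "a \<in> A" "b \<in> A"
      then obtain g h where "g \<in> carrier G" "a = ent_act \<phi> g u" "h \<in> carrier G" "b = ent_act \<phi> h u"
        unfolding Aeq by blast
      then have "(u, a) \<in> E\<^sup>*" "(u, b) \<in> E\<^sup>*" using conn S(3) by blast+
      then show "(a, b) \<in> (Gamma_edges A)\<^sup>*" unfolding E_def[symmetric] using Ertsym by (meson rtrancl_trans)
    qed
  qed
qed

end

theorem lemma3p9: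
  fixes G :: "('g, 'b) monoid_scheme" (structure)
    and \<phi> :: "'g \<Rightarrow> 'a::topological_space \<Rightarrow> 'a"
  assumes "is_compactum TYPE('a)"
    and "group G"
    and "action_by_homeos G \<phi>"
    and "three_discontinuous G \<phi>"
    and "two_cocompact G \<phi>"
  shows "finitely_generated G \<longleftrightarrow>
    (\<exists>A. A \<noteq> {} \<and> (\<forall>e\<in>A. entourage e \<and> self_linked e)
       \<and> (\<forall>g\<in>carrier G. \<forall>e\<in>A. ent_act \<phi> g e \<in> A)
       \<and> finite (ent_orbit G \<phi> ` A)
       \<and> Gamma_connected A)"
proof -
  have cU: "compact (UNIV :: 'a set)" and hsd: "hausd TYPE('a)" and thr: "\<exists>x y z::'a. distinct [x, y, z]"
    using assms(1) unfolding is_compactum_def hausd_def by blast+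
  have gaa: "group_action G UNIV \<phi>" using assms(3) unfolding action_by_homeos_def by blast
  interpret act_setup G \<phi>
    by (rule act_setup.intro[OF assms(2) gaa cU hsd thr])
  show ?thesis
  proof
    assume fg: "finitely_generated G"
    show "\<exists>A. A \<noteq> {} \<and> (\<forall>e\<in>A. entourage e \<and> self_linked e)
       \<and> (\<forall>g\<in>carrier G. \<forall>e\<in>A. ent_act \<phi> g e \<in> A)
       \<and> finite (ent_orbit G \<phi> ` A)
       \<and> Gamma_connected A" by (rule A_of_fg[OF fg])
  next
    assume "\<exists>A. A \<noteq> {} \<and> (\<forall>e\<in>A. entourage e \<and> self_linked e)
       \<and> (\<forall>g\<in>carrier G. \<forall>e\<in>A. ent_act \<phi> g e \<in> A)
       \<and> finite (ent_orbit G \<phi> ` A)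
       \<and> Gamma_connected A"
    then obtain A where A: "A \<noteq> {}" "\<forall>e\<in>A. entourage e \<and> self_linked e"
       "\<forall>g\<in>carrier G. \<forall>e\<in>A. ent_act \<phi> g e \<in> A"
       "finite (ent_orbit G \<phi> ` A)" "Gamma_connected A" by blast
    show "finitely_generated G" by (rule fg_of_A[OF assms(4) A])
  qed
qed

end
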